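(* Let $P_k\ge 3$, let $w_k$ be an integer with $1<w_k<P_k$, let $\mu>0$, $\beta>0$, $s_k>0$, and let $\nu\in\mathbb{R}^{P_k}$ with $\nu_1\ge\nu_2\ge\dots\ge\nu_{P_k}$. Consider $$\min_{x\in\mathbb{R}^{P_k},\ x\ge 0,\ \|x\|_0\le w_k}\ \ -U_k\Big(\sum_{i=1}^{P_k}x_i\Big)+\frac{\mu}{2}\|x-\nu\|_2^2 .$$ Then there is a minimizer $x^\star$ of this problem satisfying $$x^\star_i=\max(0,\nu_i+\zeta)\ \ (i=1,\dots,w_k),\qquad x^\star_i=0\ \ (i>w_k),$$ where $\zeta>0$ satisfies $\sum_{i=1}^{w_k}\max(0,\nu_i+\zeta)>0$ and $\mu\zeta=U_k'\big(\sum_{i=1}^{w_k}\max(0,\nu_i+\zeta)\big)$. Moreover, with the convention $U_k'(0)=+\infty$: if there is a smallest index $i'\in\{2,\dots,w_k\}$ such that $\zeta_0:=-\nu_{i'}>0$ and $\mu\zeta_0\ge U_k'\big(\sum_{i=1}^{w_k}\max(0,\nu_i+\zeta_0)\big)$, then $\zeta$ is the largest real root of $$\mu\zeta\Big(\sum_{i=1}^{i'-1}(\nu_i+\zeta)\Big)^2=\beta\sum_{i=1}^{i'-1}(\nu_i+\zeta)+s_k ;$$ otherwise $\zeta$ is the largest real root of $$\mu\zeta\Big(\sum_{i=1}^{w_k}(\nu_i+\zeta)\Big)^2=\beta\sum_{i=1}^{w_k}(\nu_i+\zeta)+s_k .$$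
   Context: $U_k(u)=\beta\log u-\frac{s_k}{u}$ for $u>0$ (so $U_k'(u)=\frac{\beta}{u}+\frac{s_k}{u^2}$), and $-U_k(0)$ is taken to be $+\infty$, so that the objective equals $+\infty$ at $x=0$. $\|x\|_0$ denotes the number of nonzero entries of $x$. *)

theory Defs
  imports Complex_Main "HOL-Library.Extended_Real"
begin

definition U :: "real \<Rightarrow> real \<Rightarrow> real \<Rightarrow> real" where
  "U \<beta> s u = \<beta> * ln u - s / u"

definition U' :: "real \<Rightarrow> real \<Rightarrow> real \<Rightarrow> real" where
  "U' \<beta> s u = \<beta> / u + s / u ^ 2"

text \<open>Vectors in R^P are functions on the index set {1..P}. Objective
  -U(sum x_i) + mu/2 ||x - nu||^2, with value +infinity when the sum is 0
  (i.e. at x = 0 on the nonnegative orthant), convention -U(0) = +infinity.\<close>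
definition obj :: "real \<Rightarrow> real \<Rightarrow> real \<Rightarrow> nat \<Rightarrow> (nat \<Rightarrow> real) \<Rightarrow> (nat \<Rightarrow> real) \<Rightarrow> ereal" where
  "obj \<beta> s \<mu> P \<nu> x =
     (if (\<Sum>i=1..P. x i) \<le> 0 then \<infinity>
      else ereal (- U \<beta> s (\<Sum>i=1..P. x i) + \<mu> / 2 * (\<Sum>i=1..P. (x i - \<nu> i)\<^sup>2)))"

definition feasible :: "nat \<Rightarrow> nat \<Rightarrow> (nat \<Rightarrow> real) \<Rightarrow> bool" where
  "feasible P w x \<longleftrightarrow> (\<forall>i\<in>{1..P}. 0 \<le> x i) \<and> card {i\<in>{1..P}. x i \<noteq> 0} \<le> w"

definition is_minimizer :: "real \<Rightarrow> real \<Rightarrow> real \<Rightarrow> nat \<Rightarrow> nat \<Rightarrow> (nat \<Rightarrow> real) \<Rightarrow> (nat \<Rightarrow> real) \<Rightarrow> bool" where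
  "is_minimizer \<beta> s \<mu> P w \<nu> x \<longleftrightarrow>
     feasible P w x \<and> (\<forall>y. feasible P w y \<longrightarrow> obj \<beta> s \<mu> P \<nu> x \<le> obj \<beta> s \<mu> P \<nu> y)"

text \<open>Condition on index i' with the convention U'(0) = +infinity:
  zeta0 = -nu_i' > 0 and mu zeta0 \<ge> U'(sum_{i\<le>w} max(0, nu_i + zeta0)).\<close>
definition idx_cond :: "real \<Rightarrow> real \<Rightarrow> real \<Rightarrow> nat \<Rightarrow> (nat \<Rightarrow> real) \<Rightarrow> nat \<Rightarrow> bool" where
  "idx_cond \<beta> s \<mu> w \<nu> i' \<longleftrightarrow>
     (let z0 = - \<nu> i'; S = (\<Sum>i=1..w. max 0 (\<nu> i + z0)) in
      0 < z0 \<and> 0 < S \<and> U' \<beta> s S \<le> \<mu> * z0)"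

definition largest_root :: "real \<Rightarrow> real \<Rightarrow> real \<Rightarrow> nat \<Rightarrow> (nat \<Rightarrow> real) \<Rightarrow> real \<Rightarrow> bool" where
  "largest_root \<beta> s \<mu> m \<nu> \<zeta> \<longleftrightarrow>
     (let g = (\<lambda>z. \<mu> * z * (\<Sum>i=1..m. \<nu> i + z)\<^sup>2 - (\<beta> * (\<Sum>i=1..m. \<nu> i + z) + s)) in
      g \<zeta> = 0 \<and> (\<forall>z. g z = 0 \<longrightarrow> z \<le> \<zeta>))"

end

theory Submission
  imports Defs
begin

lemma Up_anti:
  fixes \<beta> s a b :: real
  assumes "0 \<le> \<beta>" "0 \<le> s" "0 < a" "a \<le> b"
  shows "U' \<beta> s b \<le> U' \<beta> s a"
proof -
  have "\<beta> / b \<le> \<beta> / a" using assms by (simp add: divide_left_mono)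
  moreover have "a^2 \<le> b^2" using assms by (simp add: power_mono)
  hence "s / b^2 \<le> s / a^2" using assms by (simp add: divide_left_mono)
  ultimately show ?thesis unfolding U'_def by simp
qed

lemma Up_strict:
  fixes \<beta> s a b :: real
  assumes "0 < \<beta>" "0 \<le> s" "0 < a" "a < b"
  shows "U' \<beta> s b < U' \<beta> s a"
proof -
  have "\<beta> / b < \<beta> / a" using assms by (simp add: divide_strict_left_mono)
  moreover have "a^2 \<le> b^2" using assms by (simp add: power_mono)
  hence "s / b^2 \<le> s / a^2" using assms by (simp add: divide_left_mono)
  ultimately show ?thesis unfolding U'_def by simp
qed

lemma negU_conv:
  fixes \<beta> s u v :: real
  assumes "0 \<le> \<beta>" "0 \<le> s" "0 < u" "0 < v"
  shows "- U \<beta> s v - U' \<beta> s v * (u - v) \<le> - U \<beta> s u"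
proof -
  have "ln (u/v) \<le> u/v - 1" using assms by (simp add: ln_le_minus_one)
  hence l: "ln u \<le> ln v + (u - v)/v" using assms by (simp add: ln_div diff_divide_distrib)
  have "s/v - s/u \<le> s*(u-v)/v^2"
  proof -
    have "s/v - s/u - s*(u-v)/v^2 = - s*(u-v)^2/(u*v^2)" using assms
      by (simp add: field_simps power2_eq_square)
    also have "\<dots> \<le> 0" using assms by simp
    finally show ?thesis by simp
  qed
  moreover have "\<beta> * ln u \<le> \<beta> * ln v + \<beta> * ((u - v)/v)" using l assms
    by (metis distrib_left mult_left_mono)
  moreover have "(\<beta>/v + s/v^2)*(u-v) = \<beta>*((u-v)/v) + s*(u-v)/v^2" using assms
    by (simp add: field_simps)
  ultimately show ?thesis unfolding U_def U'_def by linarith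
qed

lemma sum_top:
  fixes b :: "nat \<Rightarrow> real"
  assumes "A \<subseteq> {1..P}" "card A \<le> w" "w \<le> P" "1 \<le> w"
    and nn: "\<And>i. 0 \<le> b i"
    and dec: "\<And>i j. 1 \<le> i \<Longrightarrow> i \<le> j \<Longrightarrow> j \<le> P \<Longrightarrow> b j \<le> b i"
  shows "sum b A \<le> sum b {1..w}"
proof -
  let ?W = "{1..w}"
  have fA: "finite A" using assms(1) finite_subset by blast
  have s1: "sum b A = sum b (A \<inter> ?W) + sum b (A - ?W)"
    using sum.Int_Diff[OF fA, of b ?W] .
  have s2: "sum b ?W = sum b (A \<inter> ?W) + sum b (?W - A)"
    using sum.Int_Diff[of ?W b A] by (simp add: Int_commute)
  have c1: "card A = card (A \<inter> ?W) + card (A - ?W)"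
    using card_Int_Diff[OF fA, of ?W] .
  have c2: "card ?W = card (A \<inter> ?W) + card (?W - A)"
    using card_Int_Diff[of ?W A] by (simp add: Int_commute)
  have cc: "card (A - ?W) \<le> card (?W - A)" using c1 c2 assms(2) by simp
  have "sum b (A - ?W) \<le> sum (\<lambda>_. b w) (A - ?W)"
    apply (rule sum_mono) using assms(1,3,4) dec by auto
  also have "\<dots> = card (A - ?W) * b w" by simp
  also have "\<dots> \<le> card (?W - A) * b w" using cc nn by (simp add: mult_right_mono)
  also have "\<dots> = sum (\<lambda>_. b w) (?W - A)" by simp
  also have "\<dots> \<le> sum b (?W - A)"
    apply (rule sum_mono) using assms(3) dec by auto
  finally show ?thesis using s1 s2 by simp
qed

lemma proj:
  fixes a y :: "nat \<Rightarrow> real"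
  assumes "w \<le> P" "1 \<le> w" "\<forall>i\<in>{1..P}. 0 \<le> y i" "card {i\<in>{1..P}. y i \<noteq> 0} \<le> w"
   and dec: "\<And>i j. 1\<le>i \<Longrightarrow> i\<le>j \<Longrightarrow> j\<le>P \<Longrightarrow> a j \<le> a i"
  shows "(\<Sum>i=1..P. ((if i \<le> w then max 0 (a i) else 0) - a i)^2) \<le> (\<Sum>i=1..P. (y i - a i)^2)"
proof -
  define b where "b i = (max (a i) 0)^2" for i
  define c where "c i = (min (a i) 0)^2" for i
  define A where "A = {i\<in>{1..P}. y i \<noteq> 0}"
  have bc: "(a i)^2 = b i + c i" for i unfolding b_def c_def
    by (cases "a i \<ge> 0") (auto simp: max_def min_def)
  have L: "((if i \<le> w then max 0 (a i) else 0) - a i)^2 = c i + b i - (if i \<le> w then b i else 0)" for i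
    using bc[of i] unfolding b_def c_def by (cases "a i \<ge> 0") (auto simp: max_def min_def)
  have R: "c i + b i - (if i \<in> A then b i else 0) \<le> (y i - a i)^2" if "i \<in> {1..P}" for i
  proof (cases "i \<in> A")
    case False
    hence "y i = 0" unfolding A_def using that by auto
    thus ?thesis using bc[of i] False by simp
  next
    case True
    have y: "0 \<le> y i" using assms(3) that by auto
    show ?thesis
    proof (cases "a i \<ge> 0")
      case True
      thus ?thesis using \<open>i\<in>A\<close> unfolding c_def by simp
    next
      case False
      hence "(- a i)^2 \<le> (y i - a i)^2" using y by (intro power_mono) auto
      thus ?thesis using \<open>i\<in>A\<close> False unfolding c_def by (simp add: min_def)
    qed
  qed
  have sW: "(\<Sum>i=1..P. (if i \<le> w then b i else 0)) = sum b {1..w}"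
  proof -
    have "(\<Sum>i=1..P. (if i \<le> w then b i else 0)) = sum b {i\<in>{1..P}. i \<le> w}"
      by (rule sum.inter_filter[symmetric]) simp
    also have "{i\<in>{1..P}. i \<le> w} = {1..w}" using assms(1) by auto
    finally show ?thesis .
  qed
  have sA: "(\<Sum>i=1..P. (if i \<in> A then b i else 0)) = sum b A"
  proof -
    have "(\<Sum>i=1..P. (if i \<in> A then b i else 0)) = sum b {i\<in>{1..P}. i \<in> A}"
      by (rule sum.inter_filter[symmetric]) simp
    also have "{i\<in>{1..P}. i \<in> A} = A" unfolding A_def by auto
    finally show ?thesis .
  qed
  have top: "sum b A \<le> sum b {1..w}"
  proof (rule sum_top[of A P w b])
    show "A \<subseteq> {1..P}" unfolding A_def by auto
    show "card A \<le> w" unfolding A_def using assms(4) .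
    show "\<And>i j. 1 \<le> i \<Longrightarrow> i \<le> j \<Longrightarrow> j \<le> P \<Longrightarrow> b j \<le> b i"
      unfolding b_def using dec by (intro power_mono) (auto simp: max_def, fastforce+)
  qed (use assms b_def in auto)
  have "(\<Sum>i=1..P. ((if i \<le> w then max 0 (a i) else 0) - a i)^2)
      = (\<Sum>i=1..P. c i + b i) - (\<Sum>i=1..P. (if i \<le> w then b i else 0))"
    by (simp add: L sum_subtractf)
  also have "\<dots> \<le> (\<Sum>i=1..P. c i + b i) - (\<Sum>i=1..P. (if i \<in> A then b i else 0))"
    using sW sA top by simp
  also have "\<dots> = (\<Sum>i=1..P. c i + b i - (if i \<in> A then b i else 0))"
    by (simp add: sum_subtractf)
  also have "\<dots> \<le> (\<Sum>i=1..P. (y i - a i)^2)"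
    by (rule sum_mono) (use R in auto)
  finally show ?thesis .
qed

lemma root_m:
  fixes \<mu> \<beta> s \<zeta> :: real and \<nu> :: "nat \<Rightarrow> real"
  assumes "\<mu> > 0" "\<beta> > 0" "s \<ge> 0" "1 \<le> m"
    and T: "(\<Sum>i=1..m. \<nu> i + \<zeta>) > 0" and eq: "\<mu> * \<zeta> = U' \<beta> s (\<Sum>i=1..m. \<nu> i + \<zeta>)"
  shows "largest_root \<beta> s \<mu> m \<nu> \<zeta>"
proof -
  define T where "T z = (\<Sum>i=1..m. \<nu> i + z)" for z
  have T0: "T \<zeta> > 0" using T unfolding T_def .
  have e: "\<mu> * \<zeta> = \<beta> / T \<zeta> + s / (T \<zeta>)^2" using eq unfolding T_def U'_def .
  have g0: "\<mu> * \<zeta> * (T \<zeta>)^2 - (\<beta> * T \<zeta> + s) = 0"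
    using e T0 by (simp add: field_simps power2_eq_square)
  have gz: "\<mu> * z * (T z)^2 - (\<beta> * T z + s) \<noteq> 0" if "z > \<zeta>" for z
  proof -
    have "T \<zeta> < T z" unfolding T_def
      by (rule sum_strict_mono) (use that assms(4) in auto)
    hence Tz: "T z > 0" and "U' \<beta> s (T z) < U' \<beta> s (T \<zeta>)"
      using T0 Up_strict[of \<beta> s "T \<zeta>" "T z"] assms by auto
    hence "\<beta> / T z + s / (T z)^2 < \<mu> * z"
      using eq that assms(1) unfolding T_def U'_def
      by (smt (verit) mult_strict_left_mono)
    hence "(\<beta> / T z + s / (T z)^2) * (T z)^2 < \<mu> * z * (T z)^2"
      using Tz by (simp add: mult_strict_right_mono)
    moreover have "(\<beta> / T z + s / (T z)^2) * (T z)^2 = \<beta> * T z + s"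
      using Tz by (simp add: field_simps power2_eq_square)
    ultimately show ?thesis by simp
  qed
  show ?thesis unfolding largest_root_def Let_def
    using g0 gz unfolding T_def by (meson not_le)
qed

theorem lemma3:
  fixes P w :: nat and \<mu> \<beta> s :: real and \<nu> :: "nat \<Rightarrow> real"
  assumes "P \<ge> 3" and "1 < w" and "w < P"
    and "\<mu> > 0" and "\<beta> > 0" and "s > 0"
    and "\<And>i j. 1 \<le> i \<Longrightarrow> i \<le> j \<Longrightarrow> j \<le> P \<Longrightarrow> \<nu> j \<le> \<nu> i"
  shows "\<exists>\<zeta>>0.
     (\<Sum>i=1..w. max 0 (\<nu> i + \<zeta>)) > 0 \<and>
     \<mu> * \<zeta> = U' \<beta> s (\<Sum>i=1..w. max 0 (\<nu> i + \<zeta>)) \<and>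
     is_minimizer \<beta> s \<mu> P w \<nu> (\<lambda>i. if i \<le> w then max 0 (\<nu> i + \<zeta>) else 0) \<and>
     (if \<exists>i'\<in>{2..w}. idx_cond \<beta> s \<mu> w \<nu> i'
      then largest_root \<beta> s \<mu> ((LEAST i'. i' \<in> {2..w} \<and> idx_cond \<beta> s \<mu> w \<nu> i') - 1) \<nu> \<zeta>
      else largest_root \<beta> s \<mu> w \<nu> \<zeta>)"
proof -
  note dec = assms(7)
  define h where "h z = (\<Sum>i=1..w. max 0 (\<nu> i + z))" for z
  have hmono: "h z1 \<le> h z2" if "z1 \<le> z2" for z1 z2
    unfolding h_def by (rule sum_mono) (use that in auto)
  have hge: "\<nu> 1 + z \<le> h z" for z
  proof -
    have "max 0 (\<nu> 1 + z) \<le> h z" unfolding h_def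
      by (rule member_le_sum) (use assms(2) in auto)
    thus ?thesis by simp
  qed
  have hle: "h z \<le> w * max 0 (\<nu> 1 + z)" for z
  proof -
    have "h z \<le> (\<Sum>i=1..w. max 0 (\<nu> 1 + z))" unfolding h_def
    proof (rule sum_mono)
      fix i assume "i \<in> {1..w}"
      thus "max 0 (\<nu> i + z) \<le> max 0 (\<nu> 1 + z)"
        using dec[of 1 i] assms(3) by (intro max.mono) auto
    qed
    thus ?thesis by simp
  qed
  define \<phi> where "\<phi> z = \<mu> * z - U' \<beta> s (h z)" for z
  define M where "M = 1 + \<bar>\<nu> 1\<bar>"
  define \<epsilon> where "\<epsilon> = min 1 (\<beta> / (w * \<mu> * M))"
  define R where "R = max (max 1 (2 * \<bar>\<nu> 1\<bar>)) (2 * (\<beta> + s) / \<mu>)"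
  define z1 where "z1 = - \<nu> 1 + \<epsilon>"
  define z2 where "z2 = - \<nu> 1 + R"
  have Mpos: "M > 0" unfolding M_def by simp
  have wpos: "(w::real) > 0" using assms(2) by simp
  have epos: "\<epsilon> > 0" unfolding \<epsilon>_def using assms Mpos wpos by simp
  have e1: "\<epsilon> \<le> 1" unfolding \<epsilon>_def by simp
  have R1: "R \<ge> 1" unfolding R_def by simp
  have z12: "z1 \<le> z2" unfolding z1_def z2_def using e1 R1 by simp
  have hpos: "h z \<ge> \<epsilon>" if "z \<ge> z1" for z
    using hge[of z] that unfolding z1_def by simp
  have phi1: "\<phi> z1 \<le> 0"
  proof -
    have hz1: "h z1 \<le> w * \<epsilon>" using hle[of z1] epos unfolding z1_def by simp
    have hz1p: "h z1 > 0" using hpos[of z1] epos by simp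
    have "U' \<beta> s (w * \<epsilon>) \<le> U' \<beta> s (h z1)"
      using Up_anti[of \<beta> s "h z1" "w*\<epsilon>"] hz1 hz1p assms by simp
    moreover have "\<beta> / (w * \<epsilon>) \<le> U' \<beta> s (w * \<epsilon>)" unfolding U'_def using assms by simp
    moreover have "\<mu> * z1 \<le> \<beta> / (w * \<epsilon>)"
    proof -
      have "\<epsilon> * (w * \<mu> * M) \<le> \<beta>"
      proof -
        have "\<epsilon> \<le> \<beta> / (w * \<mu> * M)" unfolding \<epsilon>_def by simp
        thus ?thesis using wpos Mpos assms(4) by (simp add: field_simps)
      qed
      hence "\<mu> * M \<le> \<beta> / (w * \<epsilon>)" using wpos epos by (simp add: field_simps)
      moreover have "z1 \<le> M" unfolding z1_def M_def using e1 by simp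
      hence "\<mu> * z1 \<le> \<mu> * M" using assms(4) by simp
      ultimately show ?thesis by simp
    qed
    ultimately show ?thesis unfolding \<phi>_def by simp
  qed
  have phi2: "\<phi> z2 \<ge> 0"
  proof -
    have hz2: "h z2 \<ge> R" using hge[of z2] unfolding z2_def by simp
    have "U' \<beta> s (h z2) \<le> U' \<beta> s R" using Up_anti[of \<beta> s R "h z2"] hz2 R1 assms by simp
    also have "U' \<beta> s R \<le> \<beta> + s"
    proof -
      have "\<beta> / R \<le> \<beta>" using R1 assms by (simp add: divide_le_eq)
      moreover have "s / R^2 \<le> s" using R1 assms
        by (simp add: divide_le_eq one_le_power)
      ultimately show ?thesis unfolding U'_def by simp
    qed
    also have "\<beta> + s \<le> \<mu> * R / 2"
    proof -
      have "2 * (\<beta> + s) / \<mu> \<le> R" unfolding R_def by simp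
      thus ?thesis using assms(4) by (simp add: field_simps)
    qed
    also have "\<mu> * R / 2 \<le> \<mu> * z2"
    proof -
      have "2 * \<bar>\<nu> 1\<bar> \<le> R" unfolding R_def by simp
      hence "R / 2 \<le> z2" unfolding z2_def by simp
      thus ?thesis using assms(4) by (simp add: mult_left_mono)
    qed
    finally show ?thesis unfolding \<phi>_def by simp
  qed
  have cont: "continuous_on {z1..z2} \<phi>"
  proof -
    have ch: "continuous_on {z1..z2} h" unfolding h_def by (intro continuous_intros)
    have nz: "\<forall>z\<in>{z1..z2}. h z \<noteq> 0" using hpos epos by force
    show ?thesis unfolding \<phi>_def U'_def
      using ch nz by (intro continuous_intros) auto
  qed
  obtain \<zeta> where z: "z1 \<le> \<zeta>" "\<zeta> \<le> z2" "\<phi> \<zeta> = 0"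
    using IVT'[of \<phi> z1 0 z2] phi1 phi2 z12 cont by auto
  have hz: "h \<zeta> > 0" using hpos[OF z(1)] epos by simp
  have eq: "\<mu> * \<zeta> = U' \<beta> s (h \<zeta>)" using z(3) unfolding \<phi>_def by simp
  have Upos: "U' \<beta> s (h \<zeta>) > 0" unfolding U'_def using hz assms
    by (intro add_pos_pos divide_pos_pos) auto
  have zpos: "\<zeta> > 0" using eq Upos assms(4) zero_less_mult_iff[of \<mu> \<zeta>] by auto
  have n1: "\<nu> 1 + \<zeta> > 0"
  proof (rule ccontr)
    assume "\<not> ?thesis"
    hence "max 0 (\<nu> 1 + \<zeta>) = 0" by simp
    hence "h \<zeta> \<le> 0" using hle[of \<zeta>] by simp
    thus False using hz by simp
  qed
  define x where "x = (\<lambda>i. if i \<le> w then max 0 (\<nu> i + \<zeta>) else (0::real))"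
  have sumx: "(\<Sum>i=1..P. x i) = h \<zeta>"
  proof -
    have "(\<Sum>i=1..P. x i) = sum (\<lambda>i. max 0 (\<nu> i + \<zeta>)) {i\<in>{1..P}. i \<le> w}"
      unfolding x_def by (rule sum.inter_filter[symmetric]) simp
    also have "{i\<in>{1..P}. i \<le> w} = {1..w}" using assms(3) by auto
    finally show ?thesis unfolding h_def .
  qed
  have feas: "feasible P w x"
  proof -
    have "{i\<in>{1..P}. x i \<noteq> 0} \<subseteq> {1..w}" unfolding x_def by auto
    hence "card {i\<in>{1..P}. x i \<noteq> 0} \<le> card {1..w}" by (intro card_mono) auto
    thus ?thesis unfolding feasible_def x_def by auto
  qed
  have expand: "(\<Sum>i=1..P. (f i - (\<nu> i + \<zeta>))^2) = (\<Sum>i=1..P. (f i - \<nu> i)^2) - 2*\<zeta>*(\<Sum>i=1..P. f i) + (\<Sum>i=1..P. 2*\<zeta>*\<nu> i + \<zeta>^2)" for f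
  proof -
    have "(\<Sum>i=1..P. (f i - (\<nu> i + \<zeta>))^2) = (\<Sum>i=1..P. ((f i - \<nu> i)^2 - 2*\<zeta>* f i) + (2*\<zeta>*\<nu> i + \<zeta>^2))"
      by (rule sum.cong) (auto simp: power2_eq_square algebra_simps)
    also have "\<dots> = (\<Sum>i=1..P. (f i - \<nu> i)^2) - 2*\<zeta>*(\<Sum>i=1..P. f i) + (\<Sum>i=1..P. 2*\<zeta>*\<nu> i + \<zeta>^2)"
      by (simp add: sum.distrib sum_subtractf sum_distrib_left)
    finally show ?thesis .
  qed
  have minim: "obj \<beta> s \<mu> P \<nu> x \<le> obj \<beta> s \<mu> P \<nu> y" if fy: "feasible P w y" for y
  proof (cases "(\<Sum>i=1..P. y i) \<le> 0")
    case True
    thus ?thesis unfolding obj_def by simp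
  next
    case False
    define Sy where "Sy = (\<Sum>i=1..P. y i)"
    have Syp: "Sy > 0" using False unfolding Sy_def by simp
    have cv: "- U \<beta> s (h \<zeta>) - U' \<beta> s (h \<zeta>) * (Sy - h \<zeta>) \<le> - U \<beta> s Sy"
      using negU_conv[of \<beta> s Sy "h \<zeta>"] assms Syp hz by simp
    have pr: "(\<Sum>i=1..P. (x i - (\<nu> i + \<zeta>))^2) \<le> (\<Sum>i=1..P. (y i - (\<nu> i + \<zeta>))^2)"
      unfolding x_def
      by (rule proj) (use fy assms(2,3) dec in \<open>auto simp: feasible_def\<close>)
    hence "(\<Sum>i=1..P. (x i - \<nu> i)^2) - 2*\<zeta>*h \<zeta> \<le> (\<Sum>i=1..P. (y i - \<nu> i)^2) - 2*\<zeta>*Sy"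
      using expand[of x] expand[of y] sumx unfolding Sy_def by simp
    hence "\<mu> / 2 * ((\<Sum>i=1..P. (x i - \<nu> i)^2) - 2*\<zeta>*h \<zeta>) \<le> \<mu> / 2 * ((\<Sum>i=1..P. (y i - \<nu> i)^2) - 2*\<zeta>*Sy)"
      using assms(4) by (simp add: mult_left_mono)
    hence "- U \<beta> s (h \<zeta>) + \<mu> / 2 * (\<Sum>i=1..P. (x i - \<nu> i)^2) \<le> - U \<beta> s Sy + \<mu> / 2 * (\<Sum>i=1..P. (y i - \<nu> i)^2)"
    proof -
      have a: "\<mu> / 2 * (\<Sum>i=1..P. (x i - \<nu> i)^2) - (\<mu>*\<zeta>)*h \<zeta> \<le> \<mu> / 2 * (\<Sum>i=1..P. (y i - \<nu> i)^2) - (\<mu>*\<zeta>)*Sy"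
        using \<open>\<mu> / 2 * _ \<le> _\<close> by (simp add: algebra_simps)
      have b: "- U \<beta> s (h \<zeta>) - (\<mu>*\<zeta>) * Sy + (\<mu>*\<zeta>) * h \<zeta> \<le> - U \<beta> s Sy"
        using cv eq by (simp add: algebra_simps)
      show ?thesis using a b by linarith
    qed
    thus ?thesis unfolding obj_def using sumx hz False Sy_def by simp
  qed
  have ismin: "is_minimizer \<beta> s \<mu> P w \<nu> x" unfolding is_minimizer_def using feas minim by blast
  have split: "h \<zeta> = (\<Sum>i=1..m. \<nu> i + \<zeta>)"
    if "1 \<le> m" "m \<le> w" "\<forall>i\<in>{1..m}. 0 \<le> \<nu> i + \<zeta>" "\<forall>i\<in>{m+1..w}. \<nu> i + \<zeta> \<le> 0" for m
  proof -
    have "{1..w} = {1..m} \<union> {m+1..w}" using that by auto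
    hence "h \<zeta> = (\<Sum>i=1..m. max 0 (\<nu> i + \<zeta>)) + (\<Sum>i=m+1..w. max 0 (\<nu> i + \<zeta>))"
      unfolding h_def by (simp add: sum.union_disjoint)
    also have "(\<Sum>i=m+1..w. max 0 (\<nu> i + \<zeta>)) = 0"
      using that(4) by (intro sum.neutral) auto
    also have "(\<Sum>i=1..m. max 0 (\<nu> i + \<zeta>)) = (\<Sum>i=1..m. \<nu> i + \<zeta>)"
      using that(3) by (intro sum.cong) auto
    finally show ?thesis by simp
  qed
  have lr: "largest_root \<beta> s \<mu> m \<nu> \<zeta>"
    if "1 \<le> m" "m \<le> w" "\<forall>i\<in>{1..m}. 0 \<le> \<nu> i + \<zeta>" "\<forall>i\<in>{m+1..w}. \<nu> i + \<zeta> \<le> 0" for m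
    using root_m[of \<mu> \<beta> s m \<nu> \<zeta>] split[OF that] hz eq assms that by simp
  have idx: "idx_cond \<beta> s \<mu> w \<nu> i \<longleftrightarrow> \<nu> i + \<zeta> \<le> 0" for i
  proof
    assume "idx_cond \<beta> s \<mu> w \<nu> i"
    hence c: "0 < - \<nu> i" "0 < h (- \<nu> i)" "U' \<beta> s (h (- \<nu> i)) \<le> \<mu> * (- \<nu> i)"
      unfolding idx_cond_def Let_def h_def by auto
    show "\<nu> i + \<zeta> \<le> 0"
    proof (rule ccontr)
      assume "\<not> ?thesis"
      hence lt: "- \<nu> i < \<zeta>" by simp
      hence "h (- \<nu> i) \<le> h \<zeta>" using hmono by simp
      hence "U' \<beta> s (h \<zeta>) \<le> U' \<beta> s (h (- \<nu> i))"
        using Up_anti[of \<beta> s "h (- \<nu> i)" "h \<zeta>"] c(2) assms(5,6) by linarith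
      moreover have "\<mu> * (- \<nu> i) < \<mu> * \<zeta>" using lt assms(4) by (rule mult_strict_left_mono)
      ultimately show False using c(3) eq by simp
    qed
  next
    assume a: "\<nu> i + \<zeta> \<le> 0"
    hence ge: "\<zeta> \<le> - \<nu> i" by simp
    hence hh: "h \<zeta> \<le> h (- \<nu> i)" using hmono by simp
    hence "U' \<beta> s (h (- \<nu> i)) \<le> U' \<beta> s (h \<zeta>)"
      using Up_anti[of \<beta> s "h \<zeta>" "h (- \<nu> i)"] hz assms(5,6) by linarith
    moreover have "\<mu> * \<zeta> \<le> \<mu> * (- \<nu> i)" using ge assms(4) by (intro mult_left_mono) auto
    ultimately show "idx_cond \<beta> s \<mu> w \<nu> i"
      unfolding idx_cond_def Let_def h_def[of "- \<nu> i", symmetric] using hh hz zpos ge eq by linarith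
  qed
  have roots: "(if \<exists>i'\<in>{2..w}. idx_cond \<beta> s \<mu> w \<nu> i'
      then largest_root \<beta> s \<mu> ((LEAST i'. i' \<in> {2..w} \<and> idx_cond \<beta> s \<mu> w \<nu> i') - 1) \<nu> \<zeta>
      else largest_root \<beta> s \<mu> w \<nu> \<zeta>)"
  proof (cases "\<exists>i'\<in>{2..w}. idx_cond \<beta> s \<mu> w \<nu> i'")
    case True
    define L where "L = (LEAST i'. i' \<in> {2..w} \<and> idx_cond \<beta> s \<mu> w \<nu> i')"
    have L1: "L \<in> {2..w} \<and> idx_cond \<beta> s \<mu> w \<nu> L"
    proof -
      have ex: "\<exists>i. i \<in> {2..w} \<and> idx_cond \<beta> s \<mu> w \<nu> i" using True by blast
      show ?thesis unfolding L_def by (rule LeastI_ex[OF ex])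
    qed
    have L2: "\<not> (i \<in> {2..w} \<and> idx_cond \<beta> s \<mu> w \<nu> i)" if "i < L" for i
      unfolding L_def by (rule not_less_Least[OF that[unfolded L_def]])
    have "largest_root \<beta> s \<mu> (L - 1) \<nu> \<zeta>"
    proof (rule lr)
      show "1 \<le> L - 1" "L - 1 \<le> w" using L1 by auto
      show "\<forall>i\<in>{1..L - 1}. 0 \<le> \<nu> i + \<zeta>"
      proof
        fix i assume i: "i \<in> {1..L-1}"
        show "0 \<le> \<nu> i + \<zeta>"
        proof (cases "i = 1")
          case True thus ?thesis using n1 by simp
        next
          case False
          have "i < L" "i \<in> {2..w}" using i L1 False by auto
          hence "\<not> idx_cond \<beta> s \<mu> w \<nu> i" using L2[of i] by blast
          thus ?thesis using idx by simp
        qed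
      qed
      show "\<forall>i\<in>{L - 1 + 1..w}. \<nu> i + \<zeta> \<le> 0"
      proof
        fix i assume i: "i \<in> {L - 1 + 1..w}"
        have "\<nu> i \<le> \<nu> L" using dec[of L i] i L1 assms(3) by auto
        moreover have "\<nu> L + \<zeta> \<le> 0" using L1 idx by simp
        ultimately show "\<nu> i + \<zeta> \<le> 0" by simp
      qed
    qed
    thus ?thesis using True unfolding L_def by simp
  next
    case False
    have "largest_root \<beta> s \<mu> w \<nu> \<zeta>"
    proof (rule lr)
      show "1 \<le> w" "w \<le> w" using assms(2) by auto
      show "\<forall>i\<in>{1..w}. 0 \<le> \<nu> i + \<zeta>"
      proof
        fix i assume i: "i \<in> {1..w}"
        show "0 \<le> \<nu> i + \<zeta>"
        proof (cases "i = 1")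
          case True thus ?thesis using n1 by simp
        next
          case f: False
          hence "\<not> idx_cond \<beta> s \<mu> w \<nu> i" using False i by auto
          thus ?thesis using idx by simp
        qed
      qed
      show "\<forall>i\<in>{w + 1..w}. \<nu> i + \<zeta> \<le> 0" by simp
    qed
    thus ?thesis using False by simp
  qed
  have all: "\<zeta> > 0 \<and> h \<zeta> > 0 \<and> \<mu> * \<zeta> = U' \<beta> s (h \<zeta>) \<and> is_minimizer \<beta> s \<mu> P w \<nu> x \<and>
     (if \<exists>i'\<in>{2..w}. idx_cond \<beta> s \<mu> w \<nu> i'
      then largest_root \<beta> s \<mu> ((LEAST i'. i' \<in> {2..w} \<and> idx_cond \<beta> s \<mu> w \<nu> i') - 1) \<nu> \<zeta>
      else largest_root \<beta> s \<mu> w \<nu> \<zeta>)"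
    using zpos hz eq ismin roots by (intro conjI)
  show ?thesis
    using all unfolding h_def x_def by (rule exI)
qed

end
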